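(* Let $R$ be an integral domain satisfying the irreducible intersection property, and let $p,q$ be prime ideals of $R$. Regarding $R_p$ and $R_q$ as subrings of $\mathrm{Frac}(R)$, the join $[R_p,R_q]$ is a local ring.
   Context: All rings are commutative with $1$. A ring $R$ satisfies the irreducible intersection property if for any prime ideals $p_1,p_2\subset R$, either $p_1+p_2=R$ or $p_1+p_2$ is a prime ideal. For subrings $A,B$ of a ring $K$, the join $[A,B]$ is the smallest subring of $K$ containing both $A$ and $B$. *)

theory Defs
  imports "HOL-Computational_Algebra.Fraction_Field"
begin

definition is_ideal :: "'a::comm_ring_1 set \<Rightarrow> bool" where
  "is_ideal I \<longleftrightarrow> 0 \<in> I \<and> (\<forall>x\<in>I. \<forall>y\<in>I. x + y \<in> I) \<and> (\<forall>r. \<forall>x\<in>I. r * x \<in> I)"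

definition prime_ideal :: "'a::comm_ring_1 set \<Rightarrow> bool" where
  "prime_ideal P \<longleftrightarrow> is_ideal P \<and> P \<noteq> UNIV \<and> (\<forall>a b. a * b \<in> P \<longrightarrow> a \<in> P \<or> b \<in> P)"

definition ideal_sum :: "'a::comm_ring_1 set \<Rightarrow> 'a set \<Rightarrow> 'a set" where
  "ideal_sum I J = {x + y | x y. x \<in> I \<and> y \<in> J}"

definition irreducible_intersection_property :: "'a::comm_ring_1 itself \<Rightarrow> bool" where
  "irreducible_intersection_property _ \<longleftrightarrow>
     (\<forall>p1 p2 :: 'a set. prime_ideal p1 \<and> prime_ideal p2 \<longrightarrow>
        ideal_sum p1 p2 = UNIV \<or> prime_ideal (ideal_sum p1 p2))"

definition is_subring :: "'b::comm_ring_1 set \<Rightarrow> bool" where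
  "is_subring S \<longleftrightarrow> 0 \<in> S \<and> 1 \<in> S \<and> (\<forall>x\<in>S. \<forall>y\<in>S. x + y \<in> S \<and> x - y \<in> S \<and> x * y \<in> S)"

definition subring_join :: "'b::comm_ring_1 set \<Rightarrow> 'b set \<Rightarrow> 'b set" where
  "subring_join A B = \<Inter>{S. is_subring S \<and> A \<subseteq> S \<and> B \<subseteq> S}"

definition ideal_of :: "'b::comm_ring_1 set \<Rightarrow> 'b set \<Rightarrow> bool" where
  "ideal_of S I \<longleftrightarrow> I \<subseteq> S \<and> 0 \<in> I \<and> (\<forall>x\<in>I. \<forall>y\<in>I. x + y \<in> I) \<and> (\<forall>r\<in>S. \<forall>x\<in>I. r * x \<in> I)"

definition maximal_ideal_of :: "'b::comm_ring_1 set \<Rightarrow> 'b set \<Rightarrow> bool" where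
  "maximal_ideal_of S M \<longleftrightarrow> ideal_of S M \<and> M \<noteq> S \<and>
     (\<forall>J. ideal_of S J \<and> M \<subseteq> J \<longrightarrow> J = M \<or> J = S)"

definition local_ring :: "'b::comm_ring_1 set \<Rightarrow> bool" where
  "local_ring S \<longleftrightarrow> is_subring S \<and> (\<exists>!M. maximal_ideal_of S M)"

definition localization :: "'a::idom set \<Rightarrow> 'a fract set" where
  "localization p = {Fract a s | a s. s \<notin> p}"

end

theory Submission
  imports Defs
begin

lemma ideal_not_one: "is_ideal (I::'a::comm_ring_1 set) \<Longrightarrow> I \<noteq> UNIV \<Longrightarrow> 1 \<notin> I"
  unfolding is_ideal_def by (metis UNIV_eq_I mult.right_neutral)

lemma prime_not_one: "prime_ideal P \<Longrightarrow> (1::'a::comm_ring_1) \<notin> P"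
  unfolding prime_ideal_def using ideal_not_one by blast

lemma prime_zero: "prime_ideal P \<Longrightarrow> (0::'a::comm_ring_1) \<in> P"
  unfolding prime_ideal_def is_ideal_def by blast

definition STs :: "'a::comm_ring_1 set \<Rightarrow> 'a set \<Rightarrow> 'a set" where
  "STs p q = {s*t | s t. s \<notin> p \<and> t \<notin> q}"

definition Iset :: "'a::comm_ring_1 set \<Rightarrow> 'a set \<Rightarrow> 'a set" where
  "Iset p q = {a. \<forall>c. a*c \<notin> STs p q}"

lemma Iset_prime:
  assumes P: "prime_ideal P" "P \<subseteq> p" "P \<subseteq> q" and a: "a \<in> P"
  shows "a \<in> Iset p q"
proof -
  { fix c s t assume "a*c = s*t" "s \<notin> p" "t \<notin> q"
    moreover have "a*c \<in> P" using P a unfolding prime_ideal_def is_ideal_def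
      by (metis mult.commute)
    ultimately have False using P unfolding prime_ideal_def by auto }
  thus ?thesis unfolding Iset_def STs_def by blast
qed

lemma Iset_zorn:
  assumes p: "prime_ideal p" and q: "prime_ideal q" and a: "a \<in> Iset p q"
  shows "\<exists>P. prime_ideal P \<and> P \<subseteq> p \<and> P \<subseteq> q \<and> a \<in> P"
proof -
  define F where "F = {J. is_ideal J \<and> a \<in> J \<and> J \<inter> STs p q = {}}"
  have ST_mult: "x*y \<in> STs p q" if xy: "x \<in> STs p q" "y \<in> STs p q" for x y
  proof -
    obtain s t where x: "x = s*t" "s \<notin> p" "t \<notin> q" using xy(1) unfolding STs_def by blast
    obtain s' t' where y: "y = s'*t'" "s' \<notin> p" "t' \<notin> q" using xy(2) unfolding STs_def by blast
    have "x*y = (s*s')*(t*t')" using x y by (simp add: ac_simps)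
    moreover have "s*s' \<notin> p" "t*t' \<notin> q" using p q x y unfolding prime_ideal_def by auto
    ultimately show ?thesis unfolding STs_def by blast
  qed
  have "is_ideal {r*a | r. True}" unfolding is_ideal_def
  proof (intro conjI)
    show "0 \<in> {r * a |r. True}" by (rule CollectI, rule exI[of _ 0]) simp
    show "\<forall>x\<in>{r * a |r. True}. \<forall>y\<in>{r * a |r. True}. x + y \<in> {r * a |r. True}"
      by (clarsimp, metis distrib_right)
    show "\<forall>r. \<forall>x\<in>{r * a |r. True}. r * x \<in> {r * a |r. True}"
      by (clarsimp, metis mult.assoc)
  qed
  moreover have "a \<in> {r * a |r. True}" by (rule CollectI, rule exI[of _ 1]) simp
  moreover have "{r * a |r. True} \<inter> STs p q = {}" using a unfolding Iset_def
      by (auto simp: mult.commute)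
  ultimately have "{r*a | r. True} \<in> F" unfolding F_def by blast
  hence "F \<noteq> {}" by blast
  moreover have "\<Union>C \<in> F" if C: "C \<noteq> {}" "subset.chain F C" for C
  proof -
    have sub: "C \<subseteq> F" and ch: "\<forall>X\<in>C. \<forall>Y\<in>C. X \<subseteq> Y \<or> Y \<subseteq> X"
      using C(2) by (auto simp: subset_chain_def)
    have "is_ideal (\<Union>C)" unfolding is_ideal_def
    proof (intro conjI ballI allI)
      show "0 \<in> \<Union>C" using C(1) sub unfolding F_def is_ideal_def by blast
    next
      fix x y assume "x \<in> \<Union>C" "y \<in> \<Union>C"
      then obtain X Y where XY: "X \<in> C" "Y \<in> C" "x \<in> X" "y \<in> Y" by blast
      show "x + y \<in> \<Union>C"
      proof (cases "X \<subseteq> Y")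
        case True
        then show ?thesis using XY sub unfolding F_def is_ideal_def by blast
      next
        case False
        then have "Y \<subseteq> X" using ch XY by blast
        then show ?thesis using XY sub unfolding F_def is_ideal_def by blast
      qed
    next
      fix r x assume "x \<in> \<Union>C"
      then show "r * x \<in> \<Union>C" using sub unfolding F_def is_ideal_def by blast
    qed
    moreover have "a \<in> \<Union>C" using C(1) sub unfolding F_def by blast
    moreover have "\<Union>C \<inter> STs p q = {}" using sub unfolding F_def by blast
    ultimately show ?thesis unfolding F_def by blast
  qed
  ultimately obtain M where M: "M \<in> F" and Mmax: "\<forall>X\<in>F. M \<subseteq> X \<longrightarrow> X = M"
    using subset_Zorn_nonempty[of F] by blast
  have Mi: "is_ideal M" and aM: "a \<in> M" and Md: "M \<inter> STs p q = {}" using M unfolding F_def by auto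
  have one: "1 \<in> STs p q" unfolding STs_def using prime_not_one[OF p] prime_not_one[OF q]
    by (metis (mono_tags, lifting) CollectI mult_1)
  have Mp: "M \<subseteq> p" "M \<subseteq> q"
  proof -
    show "M \<subseteq> p"
    proof
      fix z assume "z \<in> M"
      moreover { assume "z \<notin> p" hence "z*1 \<in> STs p q" unfolding STs_def using prime_not_one[OF q] by blast }
      ultimately show "z \<in> p" using Md by auto
    qed
    show "M \<subseteq> q"
    proof
      fix z assume "z \<in> M"
      moreover { assume "z \<notin> q" hence "1*z \<in> STs p q" unfolding STs_def using prime_not_one[OF p] by blast }
      ultimately show "z \<in> q" using Md by auto
    qed
  qed
  have ext: "\<exists>m r. m \<in> M \<and> m + r*x \<in> STs p q" if x: "x \<notin> M" for x
  proof (rule ccontr)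
    assume nex: "\<not> ?thesis"
    define Mx where "Mx = {m + r*x | m r. m \<in> M}"
    have "Mx \<in> F" unfolding F_def is_ideal_def
    proof (intro CollectI conjI ballI allI)
      show "0 \<in> Mx" unfolding Mx_def using Mi unfolding is_ideal_def
        by (metis (mono_tags, lifting) CollectI add_0 mult_zero_left)
    next
      fix u v assume "u \<in> Mx" "v \<in> Mx"
      then obtain m1 r1 m2 r2 where "u = m1 + r1*x" "v = m2 + r2*x" "m1 \<in> M" "m2 \<in> M"
        unfolding Mx_def by blast
      moreover have "m1 + m2 \<in> M" using calculation Mi unfolding is_ideal_def by blast
      moreover have "u + v = (m1 + m2) + (r1 + r2)*x" using calculation by (simp add: algebra_simps)
      ultimately show "u + v \<in> Mx" unfolding Mx_def by blast
    next
      fix r u assume "u \<in> Mx"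
      then obtain m1 r1 where "u = m1 + r1*x" "m1 \<in> M" unfolding Mx_def by blast
      moreover have "r*m1 \<in> M" using calculation Mi unfolding is_ideal_def by blast
      moreover have "r * u = r*m1 + (r*r1)*x" using calculation by (simp add: algebra_simps)
      ultimately show "r * u \<in> Mx" unfolding Mx_def by blast
    next
      show "a \<in> Mx" unfolding Mx_def using aM
        by (metis (mono_tags, lifting) CollectI add_0_right mult_zero_left)
    next
      show "Mx \<inter> STs p q = {}" using nex unfolding Mx_def by blast
    qed
    moreover have "M \<subseteq> Mx" unfolding Mx_def
    proof
      fix m assume "m \<in> M"
      then show "m \<in> {m + r * x |m r. m \<in> M}" by (intro CollectI exI[of _ m] exI[of _ 0]) simp
    qed
    moreover have "x \<in> Mx" unfolding Mx_def using Mi unfolding is_ideal_def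
      by (metis (mono_tags, lifting) CollectI add_0 mult_1)
    ultimately show False using Mmax x by blast
  qed
  have "prime_ideal M" unfolding prime_ideal_def
  proof (intro conjI allI impI)
    show "is_ideal M" by (rule Mi)
    show "M \<noteq> UNIV" using Md one by blast
  next
    fix x y assume xy: "x*y \<in> M"
    show "x \<in> M \<or> y \<in> M"
    proof (rule ccontr)
      assume "\<not> ?thesis"
      then obtain m1 r1 m2 r2 where m: "m1 \<in> M" "m1 + r1*x \<in> STs p q" "m2 \<in> M" "m2 + r2*y \<in> STs p q"
        using ext by meson
      have prod: "(m1 + r1*x)*(m2 + r2*y) = m1*(m2 + r2*y) + m2*(r1*x) + (r1*r2)*(x*y)"
        by (simp add: algebra_simps)
      have "(m1 + r1*x)*(m2 + r2*y) \<in> M" unfolding prod using Mi m xy unfolding is_ideal_def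
        by (metis mult.commute)
      moreover have "(m1 + r1*x)*(m2 + r2*y) \<in> STs p q" using ST_mult m by blast
      ultimately show False using Md by blast
    qed
  qed
  thus ?thesis using Mp aM by blast
qed


lemma Iset_add:
  assumes iip: "irreducible_intersection_property TYPE('a::comm_ring_1)"
    and p: "prime_ideal (p::'a set)" and q: "prime_ideal q"
    and a: "a \<in> Iset p q" and b: "b \<in> Iset p q"
  shows "a + b \<in> Iset p q"
proof -
  obtain P1 where P1: "prime_ideal P1" "P1 \<subseteq> p" "P1 \<subseteq> q" "a \<in> P1" using Iset_zorn[OF p q a] by blast
  obtain P2 where P2: "prime_ideal P2" "P2 \<subseteq> p" "P2 \<subseteq> q" "b \<in> P2" using Iset_zorn[OF p q b] by blast
  have padd: "\<And>x y. x \<in> p \<Longrightarrow> y \<in> p \<Longrightarrow> x + y \<in> p" using p unfolding prime_ideal_def is_ideal_def by blast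
  have qadd: "\<And>x y. x \<in> q \<Longrightarrow> y \<in> q \<Longrightarrow> x + y \<in> q" using q unfolding prime_ideal_def is_ideal_def by blast
  have sp: "ideal_sum P1 P2 \<subseteq> p"
  proof
    fix z assume "z \<in> ideal_sum P1 P2"
    then obtain x y where "z = x + y" "x \<in> P1" "y \<in> P2" unfolding ideal_sum_def by blast
    then show "z \<in> p" using padd P1(2) P2(2) by blast
  qed
  have sq: "ideal_sum P1 P2 \<subseteq> q"
  proof
    fix z assume "z \<in> ideal_sum P1 P2"
    then obtain x y where "z = x + y" "x \<in> P1" "y \<in> P2" unfolding ideal_sum_def by blast
    then show "z \<in> q" using qadd P1(3) P2(3) by blast
  qed
  have "ideal_sum P1 P2 \<noteq> UNIV" using sp prime_not_one[OF p] by blast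
  hence pr: "prime_ideal (ideal_sum P1 P2)" using iip P1(1) P2(1)
    unfolding irreducible_intersection_property_def by blast
  have "a + b \<in> ideal_sum P1 P2" using P1 P2 unfolding ideal_sum_def by blast
  thus ?thesis using Iset_prime[OF pr sp sq] by blast
qed

definition Tset :: "'a::idom set \<Rightarrow> 'a set \<Rightarrow> 'a fract set" where
  "Tset p q = {Fract a (s*t) | a s t. s \<notin> p \<and> t \<notin> q}"

lemma prime_nz: "prime_ideal P \<Longrightarrow> s \<notin> P \<Longrightarrow> (s::'a::idom) \<noteq> 0"
  using prime_zero by blast

lemma prime_mult_notin: "prime_ideal P \<Longrightarrow> s \<notin> P \<Longrightarrow> t \<notin> P \<Longrightarrow> s * t \<notin> P"
  unfolding prime_ideal_def by blast

lemma Tset_subring: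
  assumes p: "prime_ideal (p::'a::idom set)" and q: "prime_ideal q"
  shows "is_subring (Tset p q)"
  unfolding is_subring_def
proof (intro conjI ballI)
  have 1: "(1::'a) \<notin> p" "(1::'a) \<notin> q" using prime_not_one p q by auto
  show "0 \<in> Tset p q" unfolding Tset_def Zero_fract_def using 1
    by (intro CollectI exI[of _ 0] exI[of _ 1]) simp
  show "1 \<in> Tset p q" unfolding Tset_def One_fract_def using 1
    by (intro CollectI exI[of _ 1] exI[of _ 1]) simp
next
  fix x y assume "x \<in> Tset p q" "y \<in> Tset p q"
  then obtain a s t b s' t' where x: "x = Fract a (s*t)" "s \<notin> p" "t \<notin> q"
    and y: "y = Fract b (s'*t')" "s' \<notin> p" "t' \<notin> q" unfolding Tset_def by blast
  have nz: "s*t \<noteq> 0" "s'*t' \<noteq> 0" using x y prime_nz p q by auto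
  have ss: "s*s' \<notin> p" "t*t' \<notin> q" using prime_mult_notin p q x y by auto
  have e: "(s*t)*(s'*t') = (s*s')*(t*t')" by (simp add: ac_simps)
  show "x + y \<in> Tset p q" unfolding Tset_def x y add_fract[OF nz] e using ss by blast
  show "x - y \<in> Tset p q" unfolding Tset_def x y diff_fract[OF nz] e using ss by blast
  show "x * y \<in> Tset p q" unfolding Tset_def x y mult_fract e using ss by blast
qed

lemma join_eq:
  assumes p: "prime_ideal (p::'a::idom set)" and q: "prime_ideal q"
  shows "subring_join (localization p) (localization q) = Tset p q"
proof
  have 1: "(1::'a) \<notin> p" "(1::'a) \<notin> q" using prime_not_one p q by auto
  have "localization p \<subseteq> Tset p q"
  proof
    fix x assume "x \<in> localization p"
    then obtain a s where "x = Fract a s" "s \<notin> p" unfolding localization_def by blast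
    then show "x \<in> Tset p q" unfolding Tset_def using 1
      by (intro CollectI exI[of _ a] exI[of _ s] exI[of _ 1]) simp
  qed
  moreover have "localization q \<subseteq> Tset p q"
  proof
    fix x assume "x \<in> localization q"
    then obtain a s where "x = Fract a s" "s \<notin> q" unfolding localization_def by blast
    then show "x \<in> Tset p q" unfolding Tset_def using 1
      by (intro CollectI exI[of _ a] exI[of _ 1] exI[of _ s]) simp
  qed
  ultimately show "subring_join (localization p) (localization q) \<subseteq> Tset p q"
    unfolding subring_join_def using Tset_subring[OF p q] by blast
next
  show "Tset p q \<subseteq> subring_join (localization p) (localization q)"
    unfolding subring_join_def
  proof (rule Inter_greatest)
    fix S assume "S \<in> {S. is_subring S \<and> localization p \<subseteq> S \<and> localization q \<subseteq> S}"
    hence S: "is_subring S" "localization p \<subseteq> S" "localization q \<subseteq> S" by auto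
    show "Tset p q \<subseteq> S"
    proof
      fix x assume "x \<in> Tset p q"
      then obtain a s t where x: "x = Fract a (s*t)" "s \<notin> p" "t \<notin> q" unfolding Tset_def by blast
      have "Fract a s \<in> S" using S x unfolding localization_def by blast
      moreover have "Fract 1 t \<in> S" using S x unfolding localization_def by blast
      ultimately have "Fract a s * Fract 1 t \<in> S" using S unfolding is_subring_def by blast
      thus "x \<in> S" using x by simp
    qed
  qed
qed

lemma unit_iff:
  assumes p: "prime_ideal (p::'a::idom set)" and q: "prime_ideal q"
    and x: "x = Fract a (s*t)" "s \<notin> p" "t \<notin> q"
  shows "(\<exists>y\<in>Tset p q. x*y = 1) \<longleftrightarrow> a \<notin> Iset p q"
proof
  assume "\<exists>y\<in>Tset p q. x*y = 1"
  then obtain b s' t' where y: "x * Fract b (s'*t') = 1" "s' \<notin> p" "t' \<notin> q"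
    unfolding Tset_def by blast
  have nz: "s*t*(s'*t') \<noteq> 0" using x y prime_nz p q by auto
  have "Fract (a*b) (s*t*(s'*t')) = Fract 1 1" using y x by (simp add: One_fract_def)
  hence "a*b * 1 = 1 * (s*t*(s'*t'))" using eq_fract(1)[OF nz one_neq_zero, of "a*b" 1] by blast
  hence "a*b = (s*s')*(t*t')" by (simp add: ac_simps)
  moreover have "s*s' \<notin> p" "t*t' \<notin> q" using prime_mult_notin p q x y by auto
  ultimately show "a \<notin> Iset p q" unfolding Iset_def STs_def by blast
next
  assume "a \<notin> Iset p q"
  then obtain c s' t' where c: "a*c = s'*t'" "s' \<notin> p" "t' \<notin> q" unfolding Iset_def STs_def by blast
  have nz: "s*t \<noteq> 0" "s'*t' \<noteq> 0" using x c prime_nz p q by auto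
  have "Fract (c*s*t) (s'*t') \<in> Tset p q" unfolding Tset_def using c by blast
  moreover have "x * Fract (c*s*t) (s'*t') = 1"
  proof -
    have "x * Fract (c*s*t) (s'*t') = Fract (a*(c*s*t)) (s*t*(s'*t'))" using x by simp
    also have "\<dots> = Fract 1 1"
    proof -
      have nz2: "s*t*(s'*t') \<noteq> 0" using nz by simp
      have "a*(c*s*t) = (a*c)*(s*t)" by (simp only: mult.assoc)
      also have "\<dots> = s*t*(s'*t')" unfolding c(1) by (rule mult.commute)
      finally have "a*(c*s*t) * 1 = 1 * (s*t*(s'*t'))" by simp
      thus ?thesis using eq_fract(1)[OF nz2 one_neq_zero, of "a*(c*s*t)" 1] by blast
    qed
    finally show ?thesis by (simp add: One_fract_def)
  qed
  ultimately show "\<exists>y\<in>Tset p q. x*y = 1" by blast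
qed

lemma local_from_nonunits:
  assumes S: "is_subring (S::'b::comm_ring_1 set)"
    and N: "ideal_of S {x\<in>S. \<not>(\<exists>y\<in>S. x*y = 1)}"
  shows "local_ring S"
proof -
  define N where "N = {x\<in>S. \<not>(\<exists>y\<in>S. x*y = 1)}"
  have Ni: "ideal_of S N" using N N_def by simp
  have oneS: "1 \<in> S" using S unfolding is_subring_def by blast
  have NS: "N \<noteq> S" using oneS unfolding N_def by force
  have sub: "J \<subseteq> N" if J: "ideal_of S J" "J \<noteq> S" for J
  proof
    fix x assume xJ: "x \<in> J"
    show "x \<in> N"
    proof (rule ccontr)
      assume "x \<notin> N"
      then obtain y where y: "y \<in> S" "x*y = 1" using J xJ unfolding N_def ideal_of_def by blast
      have "S \<subseteq> J"
      proof
        fix r assume r: "r \<in> S"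
        have "(r*y) * x \<in> J" using J xJ r y S unfolding ideal_of_def is_subring_def by blast
        moreover have "(r*y)*x = r" using y by (simp add: ac_simps)
        ultimately show "r \<in> J" by simp
      qed
      thus False using J unfolding ideal_of_def by blast
    qed
  qed
  have maxN: "maximal_ideal_of S N" unfolding maximal_ideal_of_def
    using Ni NS sub by blast
  have "M = N" if "maximal_ideal_of S M" for M
  proof -
    have M: "ideal_of S M" "M \<noteq> S" "\<forall>J. ideal_of S J \<and> M \<subseteq> J \<longrightarrow> J = M \<or> J = S"
      using that unfolding maximal_ideal_of_def by auto
    have "M \<subseteq> N" using sub M by blast
    thus "M = N" using M Ni NS by blast
  qed
  thus ?thesis unfolding local_ring_def using S maxN by blast
qed

theorem mainTheorem7:
  fixes p q :: "'a::idom set"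
  assumes "irreducible_intersection_property TYPE('a)"
    and "prime_ideal p" and "prime_ideal q"
  shows "local_ring (subring_join (localization p) (localization q))"
proof -
  note p = assms(2) and q = assms(3)
  define T where "T = Tset p q"
  have TS: "is_subring T" unfolding T_def by (rule Tset_subring[OF p q])
  have Tmul: "\<And>x y. x \<in> T \<Longrightarrow> y \<in> T \<Longrightarrow> x*y \<in> T"
    using TS unfolding is_subring_def by blast
  have Tadd: "\<And>x y. x \<in> T \<Longrightarrow> y \<in> T \<Longrightarrow> x+y \<in> T"
    using TS unfolding is_subring_def by blast
  have "ideal_of T {x\<in>T. \<not>(\<exists>y\<in>T. x*y = 1)}" unfolding ideal_of_def
  proof (intro conjI ballI)
    show "{x \<in> T. \<not> (\<exists>y\<in>T. x * y = 1)} \<subseteq> T" by blast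
    have "0 \<in> T" using TS unfolding is_subring_def by blast
    then show "0 \<in> {x \<in> T. \<not> (\<exists>y\<in>T. x * y = 1)}" by simp
  next
    fix r x assume r: "r \<in> T" and x: "x \<in> {x \<in> T. \<not> (\<exists>y\<in>T. x * y = 1)}"
    have "r*x \<in> T" using r x Tmul by blast
    moreover have "\<not> (\<exists>y\<in>T. (r*x) * y = 1)"
    proof
      assume "\<exists>y\<in>T. (r*x) * y = 1"
      then obtain y where "y \<in> T" "(r*x)*y = 1" by blast
      moreover have "r*y \<in> T" using r calculation(1) Tmul by blast
      moreover have "x*(r*y) = 1" using calculation by (simp add: ac_simps)
      ultimately show False using x by blast
    qed
    ultimately show "r*x \<in> {x \<in> T. \<not> (\<exists>y\<in>T. x * y = 1)}" by blast
  next
    fix x y assume x: "x \<in> {x \<in> T. \<not> (\<exists>y\<in>T. x * y = 1)}" and y: "y \<in> {x \<in> T. \<not> (\<exists>y\<in>T. x * y = 1)}"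
    have xT: "x \<in> Tset p q" and xn: "\<not> (\<exists>z\<in>Tset p q. x * z = 1)" using x T_def by auto
    have yT: "y \<in> Tset p q" and yn: "\<not> (\<exists>z\<in>Tset p q. y * z = 1)" using y T_def by auto
    obtain a s t where xa: "x = Fract a (s*t)" "s \<notin> p" "t \<notin> q" using xT unfolding Tset_def by blast
    obtain b s' t' where yb: "y = Fract b (s'*t')" "s' \<notin> p" "t' \<notin> q" using yT unfolding Tset_def by blast
    have aI: "a \<in> Iset p q" using unit_iff[OF p q xa] xn by blast
    have bI: "b \<in> Iset p q" using unit_iff[OF p q yb] yn by blast
    have nz: "s*t \<noteq> 0" "s'*t' \<noteq> 0" using xa yb prime_nz p q by auto
    have e: "(s*t)*(s'*t') = (s*s')*(t*t')" by (simp add: ac_simps)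
    have xy: "x + y = Fract (a*(s'*t') + b*(s*t)) ((s*s')*(t*t'))"
      unfolding xa yb add_fract[OF nz] e by simp
    have ss: "s*s' \<notin> p" "t*t' \<notin> q" using prime_mult_notin p q xa yb by auto
    have I1: "a*(s'*t') \<in> Iset p q" using aI unfolding Iset_def by (simp add: mult.assoc)
    have I2: "b*(s*t) \<in> Iset p q" using bI unfolding Iset_def by (simp add: mult.assoc)
    have "a*(s'*t') + b*(s*t) \<in> Iset p q" using Iset_add[OF assms(1) p q I1 I2] .
    hence "\<not> (\<exists>z\<in>Tset p q. (x+y)*z = 1)" using unit_iff[OF p q xy ss] by blast
    hence "\<not> (\<exists>z\<in>T. (x+y)*z = 1)" using T_def by simp
    moreover have "x + y \<in> T" using x y Tadd by blast
    ultimately show "x + y \<in> {x \<in> T. \<not> (\<exists>y\<in>T. x * y = 1)}" by blast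
  qed
  hence "local_ring T" using local_from_nonunits[OF TS] by blast
  thus ?thesis unfolding join_eq[OF p q] T_def .
qed

end
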